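(* Let $K$ and $L$ be $n$-element finite sets, $M=K\times L$, and let $u=(u_{kl})$ be a unitary matrix indexed by $K\times L$ all of whose entries are nonzero. Then every eigenspace of the Berezin transform $I_u$ on $F(M)$ is invariant under pointwise complex conjugation $f\mapsto\bar f$. In particular, for any eigenvalue $\theta$ of $I_u$ of multiplicity $k$, the $\theta$-eigenspace, regarded as a real vector space, is the direct sum of the $k$-dimensional real vector space of real-valued $\theta$-eigenfunctions and the $k$-dimensional real vector space of purely imaginary $\theta$-eigenfunctions.
   Context: For a finite set $J$, $F(J)$ denotes the space of complex-valued functions on $J$. For $f=(f_{kl})\in F(M)$, $C_uf$ and $D_uf$ are the operators on $F(K)$ with matrices $x_{kk'}=\sum_{l\in L}u_{kl}f_{kl}\bar u_{k'l}$ and $y_{kk'}=\sum_{l\in L}u_{kl}f_{k'l}\bar u_{k'l}$ respectively; these maps $F(M)\to\operatorname{End}F(K)$ are linear bijections. The Berezin transform is $I_u:=C_u^{-1}D_u:F(M)\to F(M)$; explicitly $(I_uf)_{kl}=\sum_{k'\in K,l'\in L}\frac{u_{kl'}u_{k'l}}{u_{kl}u_{k'l'}}f_{k'l'}|u_{k'l'}|^2$. It is unitary with respect to $\langle f,g\rangle_u=\sum_{k,l}f_{kl}\bar g_{kl}|u_{kl}|^2$. *)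

theory Defs
  imports "HOL-Analysis.Analysis"
begin

text \<open>K and L are modelled as finite types 'k and 'l; functions on M = K x L are
  vectors of type complex ^ ('k \<times> 'l). The matrix u is u k l.\<close>

definition unitary_mat :: "('k::finite \<Rightarrow> 'l::finite \<Rightarrow> complex) \<Rightarrow> bool" where
  "unitary_mat u \<longleftrightarrow>
     (\<forall>k k'. (\<Sum>l\<in>UNIV. u k l * cnj (u k' l)) = (if k = k' then 1 else 0)) \<and>
     (\<forall>l l'. (\<Sum>k\<in>UNIV. cnj (u k l) * u k l') = (if l = l' then 1 else 0))"

definition berezin ::
  "('k::finite \<Rightarrow> 'l::finite \<Rightarrow> complex) \<Rightarrow> complex ^ ('k \<times> 'l) \<Rightarrow> complex ^ ('k \<times> 'l)" where
  "berezin u f = (\<chi> x. case x of (k, l) \<Rightarrow>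
     (\<Sum>k'\<in>UNIV. \<Sum>l'\<in>UNIV.
        (u k l' * u k' l) / (u k l * u k' l') * f $ (k', l') * complex_of_real ((cmod (u k' l')) ^ 2)))"

definition berezin_eigenspace ::
  "('k::finite \<Rightarrow> 'l::finite \<Rightarrow> complex) \<Rightarrow> complex \<Rightarrow> (complex ^ ('k \<times> 'l)) set" where
  "berezin_eigenspace u \<theta> = {f. berezin u f = \<theta> *s f}"

definition conj_fun :: "complex ^ 'm \<Rightarrow> complex ^ 'm" where
  "conj_fun f = (\<chi> x. cnj (f $ x))"

end

theory Submission
  imports Defs
begin

lemma ber_comp:
  "berezin u f $ (k,l) = (\<Sum>k'\<in>UNIV. \<Sum>l'\<in>UNIV.
        (u k l' * u k' l) / (u k l * u k' l') * f $ (k', l') * complex_of_real ((cmod (u k' l')) ^ 2))"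
  by (simp add: berezin_def)

lemma conj_fun_comp[simp]: "conj_fun f $ x = cnj (f $ x)"
  by (simp add: conj_fun_def)

lemma conj_fun_conj[simp]: "conj_fun (conj_fun f) = f"
  by (simp add: conj_fun_def vec_eq_iff)

lemma conj_fun_scale[simp]: "conj_fun (d *s g) = cnj d *s conj_fun g"
  by (simp add: vec_eq_iff)

lemma conj_fun_zero[simp]: "conj_fun 0 = 0"
  by (simp add: vec_eq_iff)

lemma ber_add: "berezin u (f + g) = berezin u f + berezin u g"
  unfolding vec_eq_iff
proof
  fix x :: "'a \<times> 'b" obtain k l where x: "x = (k,l)" by fastforce
  show "berezin u (f + g) $ x = (berezin u f + berezin u g) $ x"
    unfolding x vector_add_component ber_comp sum.distrib[symmetric]
    by (intro sum.cong refl) (simp add: algebra_simps add_divide_distrib)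
qed

lemma swap4: "(\<Sum>a\<in>A. \<Sum>b\<in>B. \<Sum>c\<in>C. \<Sum>d\<in>D. F a b c d) = (\<Sum>c\<in>C. \<Sum>d\<in>D. \<Sum>a\<in>A. \<Sum>b\<in>B. F a b c d)"
proof -
  have "(\<Sum>a\<in>A. \<Sum>b\<in>B. \<Sum>c\<in>C. \<Sum>d\<in>D. F a b c d) = (\<Sum>a\<in>A. \<Sum>c\<in>C. \<Sum>b\<in>B. \<Sum>d\<in>D. F a b c d)"
    by (rule sum.cong[OF refl], rule sum.swap)
  also have "\<dots> = (\<Sum>c\<in>C. \<Sum>a\<in>A. \<Sum>b\<in>B. \<Sum>d\<in>D. F a b c d)" by (rule sum.swap)
  also have "\<dots> = (\<Sum>c\<in>C. \<Sum>a\<in>A. \<Sum>d\<in>D. \<Sum>b\<in>B. F a b c d)"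
    by (rule sum.cong[OF refl], rule sum.cong[OF refl], rule sum.swap)
  also have "\<dots> = (\<Sum>c\<in>C. \<Sum>d\<in>D. \<Sum>a\<in>A. \<Sum>b\<in>B. F a b c d)"
    by (rule sum.cong[OF refl], rule sum.swap)
  finally show ?thesis .
qed

lemma ber_scale: "berezin u (c *s f) = c *s berezin u f"
  by (simp add: vec_eq_iff berezin_def sum_distrib_left algebra_simps split: prod.splits)

lemma key1:
  assumes nz: "\<forall>k l. u k l \<noteq> 0"
  shows "u k l * berezin u f $ (k,l) =
    (\<Sum>k'\<in>UNIV. \<Sum>l'\<in>UNIV. u k l' * u k' l * cnj (u k' l') * f $ (k',l'))"
  unfolding ber_comp sum_distrib_left complex_norm_square
  apply (intro sum.cong refl)
  using nz by (simp add: field_simps)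

definition Jop where "Jop u h = conj_fun (berezin u (conj_fun h))"

lemma key2:
  assumes nz: "\<forall>k l. u k l \<noteq> 0"
  shows "cnj (u k l) * Jop u h $ (k,l) =
    (\<Sum>k'\<in>UNIV. \<Sum>l'\<in>UNIV. cnj (u k l') * cnj (u k' l) * u k' l' * h $ (k',l'))"
proof -
  have "cnj (u k l) * Jop u h $ (k,l) = cnj (u k l * berezin u (conj_fun h) $ (k,l))"
    by (simp add: Jop_def)
  also have "\<dots> = cnj (\<Sum>k'\<in>UNIV. \<Sum>l'\<in>UNIV. u k l' * u k' l * cnj (u k' l') * cnj (h $ (k',l')))"
    by (subst key1[OF nz]) simp
  also have "\<dots> = (\<Sum>k'\<in>UNIV. \<Sum>l'\<in>UNIV. cnj (u k l') * cnj (u k' l) * u k' l' * h $ (k',l'))"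
    by (simp add: cnj_sum)
  finally show ?thesis .
qed

lemma JI:
  assumes un: "unitary_mat u" and nz: "\<forall>k l. u k l \<noteq> 0"
  shows "Jop u (berezin u g) = g"
proof -
  have r: "\<And>k k'. (\<Sum>l\<in>UNIV. u k l * cnj (u k' l)) = (if k = k' then 1 else 0)"
   and c: "\<And>l l'. (\<Sum>k\<in>UNIV. cnj (u k l) * u k l') = (if l = l' then 1 else 0)"
    using un unfolding unitary_mat_def by auto
  have "cnj (u k l) * Jop u (berezin u g) $ (k,l) = cnj (u k l) * g $ (k,l)" for k l
  proof -
    have "cnj (u k l) * Jop u (berezin u g) $ (k,l) =
      (\<Sum>k'\<in>UNIV. \<Sum>l'\<in>UNIV. cnj (u k l') * cnj (u k' l) * (u k' l' * berezin u g $ (k',l')))"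
      by (subst key2[OF nz]) (simp add: mult.assoc)
    also have "\<dots> = (\<Sum>k'\<in>UNIV. \<Sum>l'\<in>UNIV. \<Sum>k''\<in>UNIV. \<Sum>l''\<in>UNIV.
        cnj (u k l') * cnj (u k' l) * (u k' l'' * u k'' l' * cnj (u k'' l'') * g $ (k'',l'')))"
      by (simp add: key1[OF nz] sum_distrib_left)
    also have "\<dots> = (\<Sum>k''\<in>UNIV. \<Sum>l''\<in>UNIV. \<Sum>k'\<in>UNIV. \<Sum>l'\<in>UNIV.
        cnj (u k l') * cnj (u k' l) * (u k' l'' * u k'' l' * cnj (u k'' l'') * g $ (k'',l'')))"
      by (rule swap4)
    also have "\<dots> = (\<Sum>k''\<in>UNIV. \<Sum>l''\<in>UNIV. cnj (u k'' l'') * g $ (k'',l'') *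
        ((\<Sum>k'\<in>UNIV. cnj (u k' l) * u k' l'') * (\<Sum>l'\<in>UNIV. u k'' l' * cnj (u k l'))))"
      by (simp only: sum_product) (simp only: sum_distrib_left, simp add: mult_ac)
    also have "\<dots> = (\<Sum>k''\<in>UNIV. \<Sum>l''\<in>UNIV. if k'' = k then (if l'' = l then cnj (u k l) * g $ (k,l) else 0) else 0)"
      by (auto simp: r c intro!: sum.cong)
    also have "\<dots> = cnj (u k l) * g $ (k,l)"
      by (subst sum.swap) simp
    finally show ?thesis .
  qed
  then show ?thesis using nz by (simp add: vec_eq_iff)
qed

definition ipu where "ipu u g h = (\<Sum>k\<in>UNIV. \<Sum>l\<in>UNIV. g $ (k,l) * cnj (h $ (k,l)) * complex_of_real ((cmod (u k l))^2))"

lemma adjoint: "ipu u (berezin u g) h = ipu u g (Jop u h)"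
proof -
  define A where "A k l k' l' = (u k l' * u k' l) / (u k l * u k' l')" for k l k' l'
  define w where "w k l = complex_of_real ((cmod (u k l))^2)" for k l
  have "ipu u (berezin u g) h = (\<Sum>k\<in>UNIV. \<Sum>l\<in>UNIV. \<Sum>k'\<in>UNIV. \<Sum>l'\<in>UNIV.
      A k l k' l' * g $ (k',l') * w k' l' * (cnj (h $ (k,l)) * w k l))"
    unfolding ipu_def ber_comp A_def w_def by (simp add: sum_distrib_right mult.assoc)
  also have "\<dots> = (\<Sum>k'\<in>UNIV. \<Sum>l'\<in>UNIV. \<Sum>k\<in>UNIV. \<Sum>l\<in>UNIV.
      A k l k' l' * g $ (k',l') * w k' l' * (cnj (h $ (k,l)) * w k l))"
    by (rule swap4)
  also have "\<dots> = (\<Sum>k'\<in>UNIV. \<Sum>l'\<in>UNIV. \<Sum>k\<in>UNIV. \<Sum>l\<in>UNIV.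
      g $ (k',l') * (A k' l' k l * cnj (h $ (k,l)) * w k l) * w k' l')"
    by (intro sum.cong refl) (simp add: A_def mult_ac)
  also have "\<dots> = ipu u g (Jop u h)"
    unfolding ipu_def Jop_def A_def w_def
    by (simp only: conj_fun_comp complex_cnj_cnj ber_comp) (simp add: sum_distrib_right sum_distrib_left mult.assoc)
  finally show ?thesis .
qed

lemma Jop_scale: "Jop u (c *s h) = c *s Jop u h"
  unfolding Jop_def by (simp add: ber_scale)

lemma ber_zero: "berezin u 0 = 0"
  using ber_scale[of u 0 0] by simp

lemma ipu_pos:
  assumes nz: "\<forall>k l. u k l \<noteq> 0" and f: "f \<noteq> 0"
  shows "ipu u f f \<noteq> 0"
proof -
  obtain x where x: "f $ x \<noteq> 0" using f by (auto simp: vec_eq_iff)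
  obtain k0 l0 where x0: "x = (k0,l0)" by fastforce
  define S where "S k l = (cmod (f $ (k,l)))^2 * (cmod (u k l))^2" for k l
  have S0: "S k l \<ge> 0" for k l by (simp add: S_def)
  have "ipu u f f = (\<Sum>k\<in>UNIV. \<Sum>l\<in>UNIV. complex_of_real (S k l))"
    unfolding ipu_def S_def
    by (intro sum.cong refl) (simp only: complex_norm_square[symmetric] of_real_mult)
  also have "\<dots> = complex_of_real (\<Sum>k\<in>UNIV. \<Sum>l\<in>UNIV. S k l)"
    by (simp add: of_real_sum)
  finally have "ipu u f f = complex_of_real (\<Sum>k\<in>UNIV. \<Sum>l\<in>UNIV. S k l)" .
  moreover have "(\<Sum>k\<in>UNIV. \<Sum>l\<in>UNIV. S k l) \<noteq> 0"
  proof
    assume "(\<Sum>k\<in>UNIV. \<Sum>l\<in>UNIV. S k l) = 0"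
    then have "\<forall>k. (\<Sum>l\<in>UNIV. S k l) = 0"
      using S0 by (subst (asm) sum_nonneg_eq_0_iff) (auto intro: sum_nonneg)
    then have "\<forall>k l. S k l = 0"
      using S0 by (simp add: sum_nonneg_eq_0_iff)
    then show False using x x0 nz by (auto simp: S_def)
  qed
  ultimately show ?thesis by (metis of_real_eq_0_iff)
qed

lemma conj_inv:
  assumes un: "unitary_mat u" and nz: "\<forall>k l. u k l \<noteq> 0"
    and ef: "berezin u f = \<theta> *s f"
  shows "berezin u (conj_fun f) = \<theta> *s conj_fun f"
proof (cases "f = 0")
  case True then show ?thesis by (simp add: ber_zero)
next
  case False
  have "f = Jop u (berezin u f)" using JI[OF un nz] by simp
  also have "\<dots> = \<theta> *s Jop u f" by (simp add: ef Jop_scale)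
  finally have fJ: "f = \<theta> *s Jop u f" .
  then have th0: "\<theta> \<noteq> 0" using False by auto
  then have Jf: "Jop u f = (1/\<theta>) *s f" using fJ
  proof -
    have "(1/\<theta>) *s f = ((1/\<theta>) * \<theta>) *s Jop u f" using fJ by (metis vector_smult_assoc)
    then show ?thesis using th0 by simp
  qed
  have N: "ipu u f f \<noteq> 0" using ipu_pos[OF nz False] .
  have "ipu u (berezin u f) f = \<theta> * ipu u f f"
    unfolding ef ipu_def by (simp add: sum_distrib_left mult.assoc)
  moreover have "ipu u f (Jop u f) = cnj (1/\<theta>) * ipu u f f"
    unfolding Jf ipu_def by (simp add: sum_distrib_left mult_ac)
  ultimately have "\<theta> * ipu u f f = cnj (1/\<theta>) * ipu u f f" using adjoint by metis
  then have "\<theta> = cnj (1/\<theta>)" using N mult_cancel_right by metis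
  then have "1/\<theta> = cnj \<theta>" by (metis complex_cnj_cnj)
  then have "Jop u f = cnj \<theta> *s f" using Jf by simp
  then have "conj_fun (Jop u f) = conj_fun (cnj \<theta> *s f)" by simp
  then show ?thesis by (simp add: Jop_def vec_eq_iff)
qed


lemma scaleR_vec: "(c *\<^sub>R (f::complex^'n)) = complex_of_real c *s f"
  unfolding vec_eq_iff vector_scaleR_component vector_smult_component by (simp add: scaleR_conv_of_real)

lemma span_sub: "span (B::(complex^'n) set) \<subseteq> vec.span B"
proof
  fix x assume "x \<in> span B"
  then show "x \<in> vec.span B"
  proof (rule span_induct)
    show "subspace {x. x \<in> vec.span B}"
      unfolding subspace_def
      by (auto simp: scaleR_vec vec.span_zero vec.span_add vec.span_scale)
  qed (simp add: vec.span_base)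
qed

lemma part2:
  fixes E :: "(complex^'n) set"
  assumes E0: "0\<in>E" and Eadd: "\<And>f g. f\<in>E \<Longrightarrow> g\<in>E \<Longrightarrow> f+g\<in>E"
    and Escale: "\<And>c f. f\<in>E \<Longrightarrow> c*s f\<in>E" and Econj: "\<And>f. f\<in>E \<Longrightarrow> conj_fun f \<in> E"
  defines "R \<equiv> {f \<in> E. \<forall>x. Im (f $ x) = 0}" and "I \<equiv> {f \<in> E. \<forall>x. Re (f $ x) = 0}"
  shows "subspace R \<and> subspace I \<and> R \<inter> I = {0} \<and>
                {r + i | r i. r \<in> R \<and> i \<in> I} = E \<and>
                dim R = vec.dim E \<and> dim I = vec.dim E"
proof -
  have subR: "subspace R"
    unfolding subspace_def R_def using E0 Eadd Escale by (auto simp: scaleR_vec)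
  have subI: "subspace I"
    unfolding subspace_def I_def using E0 Eadd Escale by (auto simp: scaleR_vec)
  have RI: "R \<inter> I = {0}"
    unfolding R_def I_def using E0 by (auto simp: vec_eq_iff complex_eq_iff)
  define re where "re f = (1/2::complex) *s (f + conj_fun f)" for f :: "complex^'n"
  define im where "im f = (-\<i>/2) *s (f - conj_fun f)" for f :: "complex^'n"
  have re_c: "re f $ x = complex_of_real (Re (f $ x))" for f x
    by (simp add: re_def complex_eq_iff)
  have im_c: "im f $ x = complex_of_real (Im (f $ x))" for f x
    by (simp add: im_def complex_eq_iff)
  have Ediff: "f - g \<in> E" if "f \<in> E" "g \<in> E" for f g
    using Eadd[OF that(1) Escale[OF that(2), of "-1"]] by simp
  have reR: "re f \<in> R" if "f \<in> E" for f
    unfolding R_def using re_c that Escale Eadd Econj by (auto simp: re_def)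
  have imR: "im f \<in> R" if "f \<in> E" for f
    unfolding R_def using im_c that Escale Ediff Econj by (auto simp: im_def)
  have decomp: "f = re f + \<i> *s im f" for f
    by (simp add: vec_eq_iff re_c im_c complex_eq_iff)
  have sums: "{r + i | r i. r \<in> R \<and> i \<in> I} = E"
  proof
    show "{r + i | r i. r \<in> R \<and> i \<in> I} \<subseteq> E" using Eadd unfolding R_def I_def by auto
    show "E \<subseteq> {r + i | r i. r \<in> R \<and> i \<in> I}"
    proof
      fix f assume f: "f \<in> E"
      have "\<i> *s im f \<in> I" using Escale[of "im f" \<i>] imR[OF f] im_c unfolding R_def I_def by auto
      then show "f \<in> {r + i | r i. r \<in> R \<and> i \<in> I}" using reR[OF f] decomp[of f] by blast
    qed
  qed
  obtain B where B: "B \<subseteq> R" "independent B" "R \<subseteq> span B" "card B = dim R"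
    using basis_exists[of R] by blast
  have dimR: "dim R = vec.dim E"
  proof -
    have "vec.dim E = card B"
    proof (rule vec.dim_unique)
      show "B \<subseteq> E" using B(1) unfolding R_def by auto
      show "E \<subseteq> vec.span B"
      proof
        fix f assume f: "f \<in> E"
        have "re f \<in> vec.span B" "im f \<in> vec.span B"
          using reR[OF f] imR[OF f] B(3) span_sub by blast+
        then show "f \<in> vec.span B"
          by (subst decomp) (intro vec.span_add vec.span_scale)
      qed
      show "vec.independent B"
        unfolding vec.independent_explicit_module
      proof (intro allI impI)
        fix t c v assume t: "finite t" "t \<subseteq> B" and s: "(\<Sum>v\<in>t. c v *s v) = 0" and v: "v \<in> t"
        have indB: "\<And>u. (\<Sum>v\<in>t. u v *\<^sub>R v) = 0 \<Longrightarrow> v \<in> t \<Longrightarrow> u v = 0" for v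
          using B(2) t unfolding independent_explicit_module by blast
        have real: "w $ x = complex_of_real (Re (w $ x))" if "w \<in> t" for w x
          using that t(2) B(1) unfolding R_def by (auto simp: complex_eq_iff)
        have "(\<Sum>w\<in>t. Re (c w) *\<^sub>R w) = 0"
        proof (clarsimp simp: vec_eq_iff)
          fix x
          have "(\<Sum>w\<in>t. c w * w $ x) = 0" using s by (simp add: vec_eq_iff)
          then have "Re (\<Sum>w\<in>t. c w * w $ x) = 0" by simp
          moreover have "Re (\<Sum>w\<in>t. c w * w $ x) = (\<Sum>w\<in>t. Re (c w) * Re (w $ x))"
            by (simp add: Re_sum) (intro sum.cong refl, subst real, auto)
          moreover have "(\<Sum>w\<in>t. Re (c w) *\<^sub>R w $ x) = complex_of_real (\<Sum>w\<in>t. Re (c w) * Re (w $ x))"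
            unfolding of_real_sum
          proof (intro sum.cong refl)
            fix w assume "w \<in> t"
            from real[OF this, of x] show "Re (c w) *\<^sub>R w $ x = complex_of_real (Re (c w) * Re (w $ x))"
              by (metis of_real_mult scaleR_conv_of_real)
          qed
          ultimately show "(\<Sum>w\<in>t. Re (c w) *\<^sub>R w $ x) = 0" by simp
        qed
        then have a: "Re (c v) = 0" using indB[of "\<lambda>w. Re (c w)" v] v by simp
        have "(\<Sum>w\<in>t. Im (c w) *\<^sub>R w) = 0"
        proof (clarsimp simp: vec_eq_iff)
          fix x
          have "(\<Sum>w\<in>t. c w * w $ x) = 0" using s by (simp add: vec_eq_iff)
          then have "Im (\<Sum>w\<in>t. c w * w $ x) = 0" by simp
          moreover have "Im (\<Sum>w\<in>t. c w * w $ x) = (\<Sum>w\<in>t. Im (c w) * Re (w $ x))"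
            by (simp add: Im_sum) (intro sum.cong refl, subst real, auto)
          moreover have "(\<Sum>w\<in>t. Im (c w) *\<^sub>R w $ x) = complex_of_real (\<Sum>w\<in>t. Im (c w) * Re (w $ x))"
            unfolding of_real_sum
          proof (intro sum.cong refl)
            fix w assume "w \<in> t"
            from real[OF this, of x] show "Im (c w) *\<^sub>R w $ x = complex_of_real (Im (c w) * Re (w $ x))"
              by (metis of_real_mult scaleR_conv_of_real)
          qed
          ultimately show "(\<Sum>w\<in>t. Im (c w) *\<^sub>R w $ x) = 0" by simp
        qed
        then have b: "Im (c v) = 0" using indB[of "\<lambda>w. Im (c w)" v] v by simp
        show "c v = 0" using a b by (simp add: complex_eq_iff)
      qed
      show "card B = card B" ..
    qed
    then show ?thesis using B(4) by simp
  qed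
  have dimI: "dim I = dim R"
  proof -
    have Iim: "I = (\<lambda>f. \<i> *s f) ` R"
    proof
      show "(\<lambda>f. \<i> *s f) ` R \<subseteq> I" unfolding R_def I_def using Escale by auto
      show "I \<subseteq> (\<lambda>f. \<i> *s f) ` R"
      proof
        fix f assume f: "f \<in> I"
        have "(-\<i>) *s f \<in> R" using f Escale[of f "-\<i>"] unfolding R_def I_def by (auto simp del: vector_smult_lneg)
        moreover have "f = \<i> *s ((-\<i>) *s f)" by (simp add: vector_smult_assoc)
        ultimately show "f \<in> (\<lambda>f. \<i> *s f) ` R" by blast
      qed
    qed
    have lin: "linear (\<lambda>f::complex^'n. \<i> *s f)"
      by (rule linearI) (auto simp: vec_eq_iff vector_add_ldistrib)
    have "inj_on (\<lambda>f::complex^'n. \<i> *s f) (span R)" by (auto simp: inj_on_def)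
    then show ?thesis unfolding Iim using dim_image_eq[OF lin] by blast
  qed
  show ?thesis using subR subI RI sums dimR dimI by simp
qed


theorem lemma2p4:
  fixes u :: "'k::finite \<Rightarrow> 'l::finite \<Rightarrow> complex"
  assumes "CARD('k) = CARD('l)"
    and "unitary_mat u"
    and "\<forall>k l. u k l \<noteq> 0"
  shows "(\<forall>\<theta> f. f \<in> berezin_eigenspace u \<theta> \<longrightarrow> conj_fun f \<in> berezin_eigenspace u \<theta>) \<and>
         (\<forall>\<theta> m. vec.dim (berezin_eigenspace u \<theta>) = m \<longrightarrow>
            (let E = berezin_eigenspace u \<theta>;
                 R = {f \<in> E. \<forall>x. Im (f $ x) = 0};
                 I = {f \<in> E. \<forall>x. Re (f $ x) = 0}
             in subspace R \<and> subspace I \<and> R \<inter> I = {0} \<and>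
                {r + i | r i. r \<in> R \<and> i \<in> I} = E \<and>
                dim R = m \<and> dim I = m))"
proof -
  have cj: "conj_fun f \<in> berezin_eigenspace u \<theta>" if "f \<in> berezin_eigenspace u \<theta>" for f \<theta>
    using conj_inv[OF assms(2) assms(3)] that unfolding berezin_eigenspace_def by blast
  have E0: "0 \<in> berezin_eigenspace u \<theta>" for \<theta>
    by (simp add: berezin_eigenspace_def ber_zero)
  have Eadd: "f + g \<in> berezin_eigenspace u \<theta>"
    if "f \<in> berezin_eigenspace u \<theta>" "g \<in> berezin_eigenspace u \<theta>" for f g \<theta>
    using that by (simp add: berezin_eigenspace_def ber_add vector_add_ldistrib)
  have Escale: "c *s f \<in> berezin_eigenspace u \<theta>"
    if "f \<in> berezin_eigenspace u \<theta>" for c f \<theta>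
    using that by (simp add: berezin_eigenspace_def ber_scale vector_smult_assoc mult.commute)
  show ?thesis
  proof (intro conjI allI impI)
    show "f \<in> berezin_eigenspace u \<theta> \<Longrightarrow> conj_fun f \<in> berezin_eigenspace u \<theta>" for \<theta> f
      by (rule cj)
  next
    fix \<theta> m assume m: "vec.dim (berezin_eigenspace u \<theta>) = m"
    show "let E = berezin_eigenspace u \<theta>;
                 R = {f \<in> E. \<forall>x. Im (f $ x) = 0};
                 I = {f \<in> E. \<forall>x. Re (f $ x) = 0}
             in subspace R \<and> subspace I \<and> R \<inter> I = {0} \<and>
                {r + i | r i. r \<in> R \<and> i \<in> I} = E \<and>
                dim R = m \<and> dim I = m"
      using part2[of "berezin_eigenspace u \<theta>", OF E0 Eadd Escale cj] m
      unfolding Let_def by simp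
  qed
qed

end
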